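(* Assume (P.1), (P.4) and (P.7) hold. Let $\Omega\in\mathscr A$ be $1$-admissible with $\mathfrak m(\Omega)\in(0,+\infty)$. A function $u\in BV_0(\Omega,\mathfrak m)$ with $\|u\|_1>0$ satisfies $\mathrm{Var}(u)/\|u\|_1=\lambda_{1,1}(\Omega)$ if and only if every set $F^t$ ($t\in\mathbb R$) with $\mathfrak m(F^t)>0$ is a $1$-Cheeger set of $\Omega$, where $F^t:=\{u>t\}$ for $t\ge0$ and $F^t:=\{u<t\}$ for $t<0$. Moreover, the minimizer of the problem defining $\lambda_{1,1}(\Omega)$ exists and is unique up to multiplication by a nonzero constant if and only if $\Omega$ has a unique (up to $\mathfrak m$-negligible sets) $1$-Cheeger set.
   Context: $(X,\mathscr A,\mathfrak m)$ is a non-negative $\sigma$-finite measure space; "$A\subset B$" means $\mathfrak m(A\setminus B)=0$. $P\colon\mathscr A\to[0,+\infty]$ is a proper functional. (P.1): $P(\emptyset)=0$. (P.4): if $\chi_{E_k}\to\chi_E$ in $L^1(X,\mathfrak m)$ then $P(E)\le\liminf_k P(E_k)$. (P.7): $P(E)=P(X\setminus E)$ for all $E\in\mathscr A$. $\Omega$ is $1$-admissible if it contains some $E$ with $0<\mathfrak m(E)<+\infty$, $P(E)<+\infty$; $h_1(\Omega)=\inf\{P(E)/\mathfrak m(E): E\subset\Omega,\ 0<\mathfrak m(E)<+\infty,\ P(E)<+\infty\}$; minimizers are $1$-Cheeger sets. $\mathrm{Var}(u):=\int_{\mathbb R}P(\{u>t\})\,dt$ if $t\mapsto P(\{u>t\})$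 is $\mathscr L^1$-measurable, $+\infty$ otherwise; $BV(X,\mathfrak m)=\{u\in L^1:\mathrm{Var}(u)<\infty\}$; $BV_0(\Omega,\mathfrak m)=\{u\in BV(X,\mathfrak m):\int_{X\setminus\Omega}|u|\,d\mathfrak m=0\}$; $\lambda_{1,1}(\Omega)=\inf\{\mathrm{Var}(u)/\|u\|_1: u\in BV_0(\Omega,\mathfrak m),\ \|u\|_1>0\}$. *)

theory Defs
  imports "HOL-Analysis.Analysis"
begin

definition msub :: "'a measure \<Rightarrow> 'a set \<Rightarrow> 'a set \<Rightarrow> bool" where
  "msub M A B \<longleftrightarrow> emeasure M (A - B) = 0"

definition cheeger_competitor :: "'a measure \<Rightarrow> ('a set \<Rightarrow> ennreal) \<Rightarrow> 'a set \<Rightarrow> 'a set \<Rightarrow> bool" where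
  "cheeger_competitor M P \<Omega> E \<longleftrightarrow>
     E \<in> sets M \<and> msub M E \<Omega> \<and> 0 < emeasure M E \<and> emeasure M E < \<infinity> \<and> P E < \<infinity>"

definition admissible1 :: "'a measure \<Rightarrow> ('a set \<Rightarrow> ennreal) \<Rightarrow> 'a set \<Rightarrow> bool" where
  "admissible1 M P \<Omega> \<longleftrightarrow> (\<exists>E. cheeger_competitor M P \<Omega> E)"

definition h1 :: "'a measure \<Rightarrow> ('a set \<Rightarrow> ennreal) \<Rightarrow> 'a set \<Rightarrow> ennreal" where
  "h1 M P \<Omega> = Inf {P E / emeasure M E | E. cheeger_competitor M P \<Omega> E}"

definition cheeger1 :: "'a measure \<Rightarrow> ('a set \<Rightarrow> ennreal) \<Rightarrow> 'a set \<Rightarrow> 'a set \<Rightarrow> bool" where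
  "cheeger1 M P \<Omega> E \<longleftrightarrow> cheeger_competitor M P \<Omega> E \<and> P E / emeasure M E = h1 M P \<Omega>"

text \<open>Total variation via the coarea-type formula.\<close>
definition Var :: "'a measure \<Rightarrow> ('a set \<Rightarrow> ennreal) \<Rightarrow> ('a \<Rightarrow> real) \<Rightarrow> ennreal" where
  "Var M P u =
     (if (\<lambda>t. P {x \<in> space M. t < u x}) \<in> borel_measurable lebesgue
      then (\<integral>\<^sup>+ t. P {x \<in> space M. t < u x} \<partial>lebesgue) else \<infinity>)"

definition norm1 :: "'a measure \<Rightarrow> ('a \<Rightarrow> real) \<Rightarrow> real" where
  "norm1 M u = (\<integral> x. \<bar>u x\<bar> \<partial>M)"

definition BV :: "'a measure \<Rightarrow> ('a set \<Rightarrow> ennreal) \<Rightarrow> ('a \<Rightarrow> real) \<Rightarrow> bool" where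
  "BV M P u \<longleftrightarrow> integrable M u \<and> Var M P u < \<infinity>"

definition BV0 :: "'a measure \<Rightarrow> ('a set \<Rightarrow> ennreal) \<Rightarrow> 'a set \<Rightarrow> ('a \<Rightarrow> real) \<Rightarrow> bool" where
  "BV0 M P \<Omega> u \<longleftrightarrow> BV M P u \<and>
     (\<integral>\<^sup>+ x. ennreal \<bar>u x\<bar> * indicator (space M - \<Omega>) x \<partial>M) = 0"

definition lambda11 :: "'a measure \<Rightarrow> ('a set \<Rightarrow> ennreal) \<Rightarrow> 'a set \<Rightarrow> ennreal" where
  "lambda11 M P \<Omega> =
     Inf {Var M P u / ennreal (norm1 M u) | u. BV0 M P \<Omega> u \<and> norm1 M u > 0}"

definition lambda11_minimizer :: "'a measure \<Rightarrow> ('a set \<Rightarrow> ennreal) \<Rightarrow> 'a set \<Rightarrow> ('a \<Rightarrow> real) \<Rightarrow> bool" where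
  "lambda11_minimizer M P \<Omega> u \<longleftrightarrow>
     BV0 M P \<Omega> u \<and> norm1 M u > 0 \<and> Var M P u / ennreal (norm1 M u) = lambda11 M P \<Omega>"

definition Fset :: "'a measure \<Rightarrow> ('a \<Rightarrow> real) \<Rightarrow> real \<Rightarrow> 'a set" where
  "Fset M u t = (if 0 \<le> t then {x \<in> space M. t < u x} else {x \<in> space M. u x < t})"

end

theory Submission
  imports Defs
begin

lemma ediv_eq_iff: fixes a b c :: ennreal assumes "0 < b" "b < \<infinity>" shows "a / b = c \<longleftrightarrow> a = c * b"
  using assms ennreal_divide_times mult_divide_eq_ennreal by fastforce

lemma ediv_ge_iff: fixes a b c :: ennreal assumes "0 < b" "b < \<infinity>" shows "c \<le> a / b \<longleftrightarrow> c * b \<le> a"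
  by (metis assms(1,2) divide_less_ennreal infinity_ennreal_def linorder_not_less not_gr_zero)

lemma AE_exists_in_interval:
  assumes "AE t in lborel. Q t" "(a::real) < b"
  shows "\<exists>t. a < t \<and> t < b \<and> Q t"
proof (rule ccontr)
  assume "\<not> ?thesis"
  then have "AE t in lborel. t \<notin> {a<..<b}" using assms(1) by (auto elim!: eventually_mono)
  then have "emeasure lborel {a<..<b} = 0"
    by (subst AE_iff_measurable[symmetric, where P="\<lambda>t. t \<notin> {a<..<b}"]) auto
  with assms(2) show False by simp
qed

lemma dist_ind:
  assumes "A \<in> sets M" "B \<in> sets M"
  shows "(\<integral>\<^sup>+ x. ennreal \<bar>indicator A x - indicator B x\<bar> \<partial>M) = emeasure M ((A - B) \<union> (B - A))"
proof -
  have "\<And>x. ennreal \<bar>indicator A x - indicator B x\<bar> = indicator ((A - B) \<union> (B - A)) x"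
    by (auto simp: indicator_def)
  then show ?thesis using assms by simp
qed

lemma layer_cake_gen:
  assumes sf: "sigma_finite_measure M" 
    and S: "\<And>x. x \<in> space M \<Longrightarrow> emeasure lborel {t. (x,t) \<in> S} = ennreal \<bar>u x\<bar>"
    and Sm: "S \<inter> (space M \<times> UNIV) \<in> sets (M \<Otimes>\<^sub>M lborel)"
  shows "(\<integral>\<^sup>+t. emeasure M {x\<in>space M. (x,t) \<in> S} \<partial>lborel) = (\<integral>\<^sup>+x. ennreal \<bar>u x\<bar> \<partial>M)"
    and "(\<lambda>t. emeasure M {x\<in>space M. (x,t) \<in> S}) \<in> borel_measurable lborel"
proof -
  interpret M: sigma_finite_measure M by (rule sf)
  interpret pair_sigma_finite M lborel by standard
  let ?S = "S \<inter> (space M \<times> UNIV)"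
  have f: "indicator ?S \<in> borel_measurable (M \<Otimes>\<^sub>M lborel)" using Sm by measurable
  have eq: "\<And>t. emeasure M {x\<in>space M. (x,t) \<in> S} = (\<integral>\<^sup>+x. indicator ?S (x,t) \<partial>M)"
  proof -
    fix t
    have "{x\<in>space M. (x,t) \<in> S} = (\<lambda>x. (x,t)) -` ?S" by auto
    moreover have "(\<lambda>x. (x,t)) -` ?S \<in> sets M"
      using sets_Pair2[OF Sm] .
    moreover have "\<And>x. indicator ?S (x,t) = (indicator ((\<lambda>x. (x,t)) -` ?S) x :: ennreal)"
      by (simp add: indicator_def)
    ultimately show "emeasure M {x\<in>space M. (x,t) \<in> S} = (\<integral>\<^sup>+x. indicator ?S (x,t) \<partial>M)"
      by simp
  qed
  have "(\<integral>\<^sup>+t. emeasure M {x\<in>space M. (x,t) \<in> S} \<partial>lborel) = (\<integral>\<^sup>+t. \<integral>\<^sup>+x. indicator ?S (x,t) \<partial>M \<partial>lborel)"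
    using eq by simp
  also have "\<dots> = (\<integral>\<^sup>+x. \<integral>\<^sup>+t. indicator ?S (x,t) \<partial>lborel \<partial>M)"
    by (rule Fubini[OF f])
  also have "\<dots> = (\<integral>\<^sup>+x. ennreal \<bar>u x\<bar> \<partial>M)"
  proof (rule nn_integral_cong)
    fix x assume x: "x \<in> space M"
    have e: "Pair x -` ?S = {t. (x,t) \<in> S}" using x by auto
    have "Pair x -` ?S \<in> sets lborel" using sets_Pair1[OF Sm] .
    moreover have "\<And>t. indicator ?S (x,t) = (indicator (Pair x -` ?S) t :: ennreal)"
      by (simp add: indicator_def)
    ultimately have "(\<integral>\<^sup>+t. indicator ?S (x,t) \<partial>lborel) = emeasure lborel (Pair x -` ?S)"
      by simp
    then show "(\<integral>\<^sup>+t. indicator ?S (x,t) \<partial>lborel) = ennreal \<bar>u x\<bar>"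
      using S[OF x] e by simp
  qed
  finally show "(\<integral>\<^sup>+t. emeasure M {x\<in>space M. (x,t) \<in> S} \<partial>lborel) = (\<integral>\<^sup>+x. ennreal \<bar>u x\<bar> \<partial>M)" .
  have "(\<lambda>t. \<integral>\<^sup>+x. indicator ?S (x,t) \<partial>M) \<in> borel_measurable lborel"
    using measurable_pair_swap[OF f] by measurable
  then show "(\<lambda>t. emeasure M {x\<in>space M. (x,t) \<in> S}) \<in> borel_measurable lborel"
    using eq by simp
qed

lemma layer_cake:
  assumes sf: "sigma_finite_measure M" and u[measurable]: "u \<in> borel_measurable M"
  shows "(\<integral>\<^sup>+t. emeasure M {x\<in>space M. (0 \<le> t \<and> t < u x) \<or> (t < 0 \<and> u x \<le> t)} \<partial>lborel) = (\<integral>\<^sup>+x. ennreal \<bar>u x\<bar> \<partial>M)"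
    and "(\<lambda>t. emeasure M {x\<in>space M. (0 \<le> t \<and> t < u x) \<or> (t < 0 \<and> u x \<le> t)}) \<in> borel_measurable lborel"
proof -
  let ?S = "{(x,t). (0 \<le> t \<and> t < u x) \<or> (t < 0 \<and> u x \<le> t)}"
  have S: "emeasure lborel {t. (x,t) \<in> ?S} = ennreal \<bar>u x\<bar>" for x
  proof (cases "0 \<le> u x")
    case True
    then have "{t. (x,t) \<in> ?S} = {0..<u x}" by auto
    then show ?thesis using True by simp
  next
    case False
    then have "{t. (x,t) \<in> ?S} = {u x..<0}" by auto
    then show ?thesis using False by simp
  qed
  have Sm: "?S \<inter> (space M \<times> UNIV) \<in> sets (M \<Otimes>\<^sub>M lborel)"
  proof -
    have "?S \<inter> (space M \<times> UNIV) = {p \<in> space (M \<Otimes>\<^sub>M lborel). (0 \<le> snd p \<and> snd p < u (fst p)) \<or> (snd p < 0 \<and> u (fst p) \<le> snd p)}"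
      by (auto simp: space_pair_measure)
    also have "\<dots> \<in> sets (M \<Otimes>\<^sub>M lborel)" by measurable
    finally show ?thesis .
  qed
  show "(\<integral>\<^sup>+t. emeasure M {x\<in>space M. (0 \<le> t \<and> t < u x) \<or> (t < 0 \<and> u x \<le> t)} \<partial>lborel) = (\<integral>\<^sup>+x. ennreal \<bar>u x\<bar> \<partial>M)"
    using layer_cake_gen(1)[OF sf S Sm] by simp
  show "(\<lambda>t. emeasure M {x\<in>space M. (0 \<le> t \<and> t < u x) \<or> (t < 0 \<and> u x \<le> t)}) \<in> borel_measurable lborel"
    using layer_cake_gen(2)[OF sf S Sm] by simp
qed



lemma nullAE: "N \<in> sets M \<Longrightarrow> emeasure M N = 0 \<Longrightarrow> AE x in M. x \<notin> N"
  by (intro AE_not_in) (simp add: null_sets_def)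

lemma AE_null: assumes "N \<in> sets M" "AE x in M. x \<notin> N" shows "emeasure M N = 0"
proof -
  have "{x\<in>space M. \<not> x \<notin> N} = N" using sets.sets_into_space[OF assms(1)] by auto
  then show ?thesis using AE_iff_measurable[of N M "\<lambda>x. x \<notin> N"] assms by simp
qed

lemma level_const:
  fixes w :: "'a \<Rightarrow> real"
  assumes w[measurable]: "w \<in> borel_measurable M" and E[measurable]: "E \<in> sets M" and Ep: "0 < emeasure M E"
    and a: "AE x in M. 0 \<le> w x"
    and b: "\<And>t. 0 < t \<Longrightarrow> emeasure M {x\<in>space M. t < w x} = 0 \<or>
             (emeasure M (E - {x\<in>space M. t < w x}) = 0 \<and> emeasure M ({x\<in>space M. t < w x} - E) = 0)"
  shows "\<exists>c. AE x in M. w x = c * indicator E x"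
proof -
  let ?G = "\<lambda>t. {x\<in>space M. t < w x}"
  have b1: "AE x in M. x \<notin> E \<longrightarrow> \<not> t < w x" if t: "0 < t" for t
  proof -
    have "emeasure M (?G t - E) = 0"
    proof (cases "emeasure M (?G t) = 0")
      case True
      have "emeasure M (?G t - E) \<le> emeasure M (?G t)" by (intro emeasure_mono) auto
      then show ?thesis using True by simp
    qed (use b[OF t] in auto)
    from nullAE[OF _ this] show ?thesis by (auto elim!: eventually_mono) 
  qed
  have b2: "AE x in M. x \<in> E \<longrightarrow> t < w x" if t: "0 < t" "0 < emeasure M (?G t)" for t
  proof -
    have "emeasure M (E - ?G t) = 0" using b[OF t(1)] t(2) by auto
    from nullAE[OF _ this] show ?thesis by (auto elim!: eventually_mono) 
  qed
  have "AE x in M. \<forall>k::nat. x \<notin> E \<longrightarrow> \<not> inverse (real (Suc k)) < w x"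
    unfolding AE_all_countable using b1 by simp
  then have out: "AE x in M. x \<notin> E \<longrightarrow> w x = 0"
    using a
  proof eventually_elim
    case (elim x)
    show ?case
    proof
      assume x: "x \<notin> E"
      have "w x \<le> 0"
      proof (rule ccontr)
        assume "\<not> w x \<le> 0"
        then obtain n where "inverse (real (Suc n)) < w x" using reals_Archimedean[of "w x"] by auto
        with elim x show False by blast
      qed
      with elim show "w x = 0" by simp
    qed
  qed
  define T where "T = {t. 0 < t \<and> 0 < emeasure M (?G t)}"
  show ?thesis
  proof (cases "T = {}")
    case True
    have "AE x in M. \<forall>k::nat. \<not> inverse (real (Suc k)) < w x"
      unfolding AE_all_countable
    proof
      fix k :: nat
      have "inverse (real (Suc k)) \<notin> T" using True by auto
      then have "emeasure M (?G (inverse (real (Suc k)))) = 0" by (auto simp: T_def zero_less_iff_neq_zero)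
      from nullAE[OF _ this] show "AE x in M. \<not> inverse (real (Suc k)) < w x" by (auto elim!: eventually_mono)
    qed
    then have "AE x in M. w x = 0 * indicator E x"
      using a
    proof eventually_elim
      case (elim x)
      have "w x \<le> 0"
      proof (rule ccontr)
        assume "\<not> w x \<le> 0"
        then obtain n where "inverse (real (Suc n)) < w x" using reals_Archimedean[of "w x"] by auto
        with elim show False by blast
      qed
      with elim show ?case by simp
    qed
    then show ?thesis by blast
  next
    case False
    have Tsub: "0 < t \<and> 0 < emeasure M (?G t)" if "t \<in> T" for t using that by (simp add: T_def)
    have bdd: "bdd_above T"
    proof (rule ccontr)
      assume nb: "\<not> bdd_above T"
      have "AE x in M. \<forall>k::nat. x \<in> E \<longrightarrow> real (Suc k) < w x"
        unfolding AE_all_countable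
      proof
        fix k :: nat
        obtain t where t: "t \<in> T" "real (Suc k) < t" using nb by (meson bdd_above_def linorder_not_le)
        have "emeasure M (?G t) \<le> emeasure M (?G (real (Suc k)))"
          using t by (intro emeasure_mono) auto
        then have "0 < emeasure M (?G (real (Suc k)))" using Tsub[OF t(1)] by (meson order_less_le_trans)
        then show "AE x in M. x \<in> E \<longrightarrow> real (Suc k) < w x" by (intro b2) auto
      qed
      then have "AE x in M. x \<notin> E"
      proof eventually_elim
        case (elim x)
        show ?case
        proof
          assume x: "x \<in> E"
          obtain n where "w x < real n" using reals_Archimedean2 by blast
          moreover have "real (Suc n) < w x" using elim x by blast
          ultimately show False by simp
        qed
      qed
      then have "emeasure M E = 0" by (rule AE_null[OF E])
      with Ep show False by simp
    qed
    define c where "c = Sup T"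
    have up: "AE x in M. w x \<le> c"
    proof -
      have "AE x in M. \<forall>k::nat. \<not> c + inverse (real (Suc k)) < w x"
        unfolding AE_all_countable
      proof
        fix k :: nat
        obtain t0 where "t0 \<in> T" using False by auto
        then have "t0 \<le> c" "0 < t0" using cSup_upper[OF _ bdd] Tsub unfolding c_def by auto
        then have pos: "0 < c + inverse (real (Suc k))" by (smt (verit) inverse_positive_iff_positive of_nat_0_less_iff zero_less_Suc)
        have "c + inverse (real (Suc k)) \<notin> T"
        proof
          assume "c + inverse (real (Suc k)) \<in> T"
          then have "c + inverse (real (Suc k)) \<le> c" using cSup_upper[OF _ bdd] unfolding c_def by blast
          moreover have "0 < inverse (real (Suc k))" by simp
          ultimately show False by linarith
        qed
        then have "emeasure M (?G (c + inverse (real (Suc k)))) = 0"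
          using pos by (auto simp: T_def zero_less_iff_neq_zero)
        from nullAE[OF _ this] show "AE x in M. \<not> c + inverse (real (Suc k)) < w x"
          by (auto elim!: eventually_mono)
      qed
      then show ?thesis
      proof eventually_elim
        case (elim x)
        show ?case
        proof (rule ccontr)
          assume "\<not> w x \<le> c"
          then obtain n where "inverse (real (Suc n)) < w x - c" using reals_Archimedean[of "w x - c"] by auto
          moreover have "\<not> c + inverse (real (Suc n)) < w x" using elim by blast
          ultimately show False by linarith
        qed
      qed
    qed
    have low: "AE x in M. x \<in> E \<longrightarrow> c \<le> w x"
    proof -
      have "AE x in M. \<forall>k::nat. x \<in> E \<longrightarrow> c - inverse (real (Suc k)) < w x"
        unfolding AE_all_countable
      proof
        fix k :: nat
        have "c - inverse (real (Suc k)) < Sup T" unfolding c_def by simp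
        then obtain t where t: "t \<in> T" "c - inverse (real (Suc k)) < t" using less_cSupD[OF False] by blast
        have "AE x in M. x \<in> E \<longrightarrow> t < w x" using b2 Tsub[OF t(1)] by auto
        then show "AE x in M. x \<in> E \<longrightarrow> c - inverse (real (Suc k)) < w x"
          using t(2) by (auto elim!: eventually_mono)
      qed
      then show ?thesis
      proof eventually_elim
        case (elim x)
        show ?case
        proof
          assume x: "x \<in> E"
          show "c \<le> w x"
          proof (rule ccontr)
            assume "\<not> c \<le> w x"
            then obtain n where "inverse (real (Suc n)) < c - w x" using reals_Archimedean[of "c - w x"] by auto
            moreover have "c - inverse (real (Suc n)) < w x" using elim x by blast
            ultimately show False by simp
          qed
        qed
      qed
    qed
    have "AE x in M. w x = c * indicator E x"
      using up low out by eventually_elim (auto simp: indicator_def)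
    then show ?thesis by blast
  qed
qed

locale CS =
  fixes M :: "'a measure" and P :: "'a set \<Rightarrow> ennreal" and \<Omega> :: "'a set"
  assumes sf: "sigma_finite_measure M"
    and P1: "P {} = 0"
    and P4: "\<And>Es E. (\<forall>k. Es k \<in> sets M) \<Longrightarrow> E \<in> sets M \<Longrightarrow>
               (\<lambda>k. \<integral>\<^sup>+ x. ennreal \<bar>indicator (Es k) x - indicator E x\<bar> \<partial>M) \<longlonglongrightarrow> 0 \<Longrightarrow>
               P E \<le> liminf (\<lambda>k. P (Es k))"
    and P7: "\<And>E. E \<in> sets M \<Longrightarrow> P E = P (space M - E)"
    and \<Omega>: "\<Omega> \<in> sets M"
    and adm: "admissible1 M P \<Omega>"
    and fin: "emeasure M \<Omega> < \<infinity>"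
begin

abbreviation "h \<equiv> h1 M P \<Omega>"

lemma P_le:
  assumes "A \<in> sets M" "B \<in> sets M" "emeasure M (A - B) = 0" "emeasure M (B - A) = 0"
  shows "P A \<le> P B"
proof -
  have "(\<lambda>k. \<integral>\<^sup>+ x. ennreal \<bar>indicator B x - indicator A x\<bar> \<partial>M) \<longlonglongrightarrow> 0"
  proof -
    have "emeasure M ((B - A) \<union> (A - B)) \<le> emeasure M (B - A) + emeasure M (A - B)"
      using assms by (intro emeasure_subadditive) auto
    then show ?thesis using assms by (simp add: dist_ind)
  qed
  from P4[of "\<lambda>k. B" A, OF _ _ this] assms show ?thesis by (simp add: Liminf_const)
qed

lemma P_cong:
  assumes "A \<in> sets M" "B \<in> sets M" "emeasure M (A - B) = 0" "emeasure M (B - A) = 0"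
  shows "P A = P B"
  using P_le[OF assms] P_le[OF assms(2,1,4,3)] by simp

lemma P_null: assumes "A \<in> sets M" "emeasure M A = 0" shows "P A = 0"
  using P_cong[OF assms(1), of "{}"] assms P1 by simp

lemma P_space: "P (space M) = 0"
  using P7[of "{}"] P1 by simp

lemma msub_fin: assumes "E \<in> sets M" "msub M E \<Omega>" shows "emeasure M E < \<infinity>"
proof -
  have "emeasure M E = emeasure M ((E \<inter> \<Omega>) \<union> (E - \<Omega>))" by (metis Int_Diff_Un)
  also have "\<dots> \<le> emeasure M (E \<inter> \<Omega>) + emeasure M (E - \<Omega>)"
    using assms \<Omega> by (intro emeasure_subadditive) auto
  also have "\<dots> \<le> emeasure M \<Omega>" using assms \<Omega> by (auto simp: msub_def intro!: emeasure_mono)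
  finally show ?thesis using fin by simp
qed

lemma h_le: "cheeger_competitor M P \<Omega> E \<Longrightarrow> h \<le> P E / emeasure M E"
  unfolding h1_def by (rule Inf_lower) blast

lemma h_fin: "h < \<infinity>"
proof -
  obtain E where E: "cheeger_competitor M P \<Omega> E" using adm by (auto simp: admissible1_def)
  then have "P E / emeasure M E \<noteq> \<infinity>"
    by (auto simp: cheeger_competitor_def ennreal_divide_eq_top_iff)
  then have "P E / emeasure M E < \<infinity>" by (simp add: top.not_eq_extremum)
  with h_le[OF E] show ?thesis by simp
qed

lemma key: assumes "E \<in> sets M" "msub M E \<Omega>" shows "h * emeasure M E \<le> P E"
proof (cases "emeasure M E = 0 \<or> P E = \<infinity>")
  case True then show ?thesis by auto
next
  case False
  then have c: "cheeger_competitor M P \<Omega> E" using assms msub_fin[OF assms]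
    by (auto simp: cheeger_competitor_def top.not_eq_extremum zero_less_iff_neq_zero)
  then show ?thesis using h_le[OF c] ediv_ge_iff[of "emeasure M E"] msub_fin[OF assms] False
    by (auto simp: zero_less_iff_neq_zero)
qed

lemma cheegerI:
  assumes "E \<in> sets M" "msub M E \<Omega>" "0 < emeasure M E" "P E \<le> h * emeasure M E"
  shows "cheeger1 M P \<Omega> E"
proof -
  have fE: "emeasure M E < \<infinity>" using msub_fin assms by auto
  have "P E < \<infinity>" using assms(4) h_fin fE
    using ennreal_mult_less_top[of h "emeasure M E"] by (simp add: order.strict_trans1)
  then have c: "cheeger_competitor M P \<Omega> E" using assms fE by (auto simp: cheeger_competitor_def)
  have "P E = h * emeasure M E" using key[OF assms(1,2)] assms(4) by simp
  then have "P E / emeasure M E = h" using ediv_eq_iff assms(3) fE by simp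
  then show ?thesis using c by (simp add: cheeger1_def)
qed

lemma cheegerD:
  assumes "cheeger1 M P \<Omega> E"
  shows "P E = h * emeasure M E" "E \<in> sets M" "msub M E \<Omega>" "0 < emeasure M E" "emeasure M E < \<infinity>"
  using assms ediv_eq_iff[of "emeasure M E" "P E" h] by (auto simp: cheeger1_def cheeger_competitor_def)

lemma lsc_bound:
  assumes A: "A \<in> sets M" "\<And>k. As k \<in> sets M"
    and conv: "(\<lambda>k. emeasure M ((As k - A) \<union> (A - As k))) \<longlonglongrightarrow> 0"
    and le: "\<And>k. P (As k) \<le> h * (c + d k)" and d: "d \<longlonglongrightarrow> 0"
  shows "P A \<le> h * c"
proof -
  have "P A \<le> liminf (\<lambda>k. P (As k))"
    using P4[of As A] A conv by (simp add: dist_ind)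
  also have "\<dots> \<le> liminf (\<lambda>k. h * (c + d k))"
    using le by (intro Liminf_mono) auto
  also have "liminf (\<lambda>k. h * (c + d k)) = h * (c + 0)"
  proof (rule lim_imp_Liminf)
    show "(\<lambda>k. h * (c + d k)) \<longlonglongrightarrow> h * (c + 0)"
      using h_fin by (intro ennreal_tendsto_cmult tendsto_add d tendsto_const) auto
  qed simp
  finally show ?thesis by simp
qed


lemma BV0_meas: "BV0 M P \<Omega> u \<Longrightarrow> u \<in> borel_measurable M"
  by (auto simp: BV0_def BV_def)

lemma nz_msub: assumes "BV0 M P \<Omega> u" shows "msub M {x\<in>space M. u x \<noteq> 0} \<Omega>"
proof -
  have um[measurable]: "u \<in> borel_measurable M" using BV0_meas[OF assms] .
  have \<Omega>m[measurable]: "\<Omega> \<in> sets M" using \<Omega> .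
  have "(\<integral>\<^sup>+ x. ennreal \<bar>u x\<bar> * indicator (space M - \<Omega>) x \<partial>M) = 0"
    using assms by (simp add: BV0_def)
  then have "AE x in M. ennreal \<bar>u x\<bar> * indicator (space M - \<Omega>) x = 0"
    by (subst (asm) nn_integral_0_iff_AE) auto
  then have "AE x in M. x \<notin> \<Omega> \<longrightarrow> u x = 0"
    by (auto elim!: eventually_mono simp: indicator_def)
  moreover have "{x\<in>space M. u x \<noteq> 0} - \<Omega> \<in> sets M" by measurable
  moreover have "{x\<in>space M. \<not> (x \<notin> \<Omega> \<longrightarrow> u x = 0)} = {x\<in>space M. u x \<noteq> 0} - \<Omega>" by auto
  ultimately show ?thesis unfolding msub_def
    using AE_iff_measurable[of "{x\<in>space M. u x \<noteq> 0} - \<Omega>" M "\<lambda>x. x \<notin> \<Omega> \<longrightarrow> u x = 0"] by simp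
qed

lemma sub_msub:
  assumes "BV0 M P \<Omega> u" "A \<in> sets M" "A \<subseteq> {x\<in>space M. u x \<noteq> 0}"
  shows "msub M A \<Omega>"
proof -
  have um[measurable]: "u \<in> borel_measurable M" using BV0_meas[OF assms(1)] .
  have "emeasure M (A - \<Omega>) \<le> emeasure M ({x\<in>space M. u x \<noteq> 0} - \<Omega>)"
    using assms \<Omega> by (intro emeasure_mono) auto
  then show ?thesis using nz_msub[OF assms(1)] by (simp add: msub_def)
qed

lemma nz_fin: assumes "BV0 M P \<Omega> u" shows "emeasure M {x\<in>space M. u x \<noteq> 0} < \<infinity>"
proof -
  have um[measurable]: "u \<in> borel_measurable M" using BV0_meas[OF assms(1)] .
  show ?thesis using msub_fin[OF _ nz_msub[OF assms]] by simp
qed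

lemma norm_eq: assumes "BV0 M P \<Omega> u" shows "ennreal (norm1 M u) = (\<integral>\<^sup>+ x. ennreal \<bar>u x\<bar> \<partial>M)"
proof -
  have "integrable M u" using assms by (simp add: BV0_def BV_def)
  then show ?thesis unfolding norm1_def by (subst nn_integral_eq_integral) auto
qed

lemma Var_eq: assumes "BV0 M P \<Omega> u"
  shows "Var M P u = (\<integral>\<^sup>+ t. P {x \<in> space M. t < u x} \<partial>lebesgue)"
    and "(\<lambda>t. P {x \<in> space M. t < u x}) \<in> borel_measurable lebesgue"
proof -
  have "Var M P u < \<infinity>" using assms by (simp add: BV0_def BV_def)
  then show "(\<lambda>t. P {x \<in> space M. t < u x}) \<in> borel_measurable lebesgue"
    by (auto simp: Var_def split: if_splits)
  then show "Var M P u = (\<integral>\<^sup>+ t. P {x \<in> space M. t < u x} \<partial>lebesgue)"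
    by (simp add: Var_def)
qed

lemma pointwise:
  assumes "BV0 M P \<Omega> u"
  shows "h * emeasure M {x\<in>space M. (0 \<le> t \<and> t < u x) \<or> (t < 0 \<and> u x \<le> t)} \<le> P {x \<in> space M. t < u x}"
proof -
  have um[measurable]: "u \<in> borel_measurable M" using BV0_meas[OF assms(1)] .
  let ?F = "{x\<in>space M. (0 \<le> t \<and> t < u x) \<or> (t < 0 \<and> u x \<le> t)}"
  have Fm: "?F \<in> sets M" by measurable
  have "?F \<subseteq> {x\<in>space M. u x \<noteq> 0}" by auto
  then have Fs: "msub M ?F \<Omega>" using sub_msub[OF assms Fm] by blast
  have "P {x \<in> space M. t < u x} = P ?F"
  proof (cases "0 \<le> t")
    case True then show ?thesis by (auto intro!: arg_cong[where f=P])
  next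
    case False
    have "P {x \<in> space M. t < u x} = P (space M - {x \<in> space M. t < u x})"
      by (intro P7) measurable
    also have "space M - {x \<in> space M. t < u x} = ?F" using False by auto
    finally show ?thesis .
  qed
  then show ?thesis using key[OF Fm Fs] by simp
qed

lemma g_integral:
  assumes "BV0 M P \<Omega> u"
  shows "(\<integral>\<^sup>+ t. h * emeasure M {x\<in>space M. (0 \<le> t \<and> t < u x) \<or> (t < 0 \<and> u x \<le> t)} \<partial>lebesgue) = h * ennreal (norm1 M u)"
    and "(\<lambda>t. h * emeasure M {x\<in>space M. (0 \<le> t \<and> t < u x) \<or> (t < 0 \<and> u x \<le> t)}) \<in> borel_measurable lebesgue"
proof -
  have um[measurable]: "u \<in> borel_measurable M" using BV0_meas[OF assms(1)] .
  note lc = layer_cake[OF sf um]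
  show "(\<integral>\<^sup>+ t. h * emeasure M {x\<in>space M. (0 \<le> t \<and> t < u x) \<or> (t < 0 \<and> u x \<le> t)} \<partial>lebesgue) = h * ennreal (norm1 M u)"
    unfolding nn_integral_completion
    by (subst nn_integral_cmult[OF lc(2)]) (simp add: lc(1) norm_eq[OF assms])
  show "(\<lambda>t. h * emeasure M {x\<in>space M. (0 \<le> t \<and> t < u x) \<or> (t < 0 \<and> u x \<le> t)}) \<in> borel_measurable lebesgue"
    using lc(2) by (intro measurable_completion borel_measurable_times_ennreal borel_measurable_const) 
qed

lemma coarea_ineq:
  assumes "BV0 M P \<Omega> u"
  shows "h * ennreal (norm1 M u) \<le> Var M P u"
  unfolding Var_eq(1)[OF assms] g_integral(1)[OF assms, symmetric]
  by (intro nn_integral_mono pointwise[OF assms])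

lemma indicator_BV0:
  assumes "cheeger_competitor M P \<Omega> E"
  shows "BV0 M P \<Omega> (indicator E)" "ennreal (norm1 M (indicator E)) = emeasure M E"
    "norm1 M (indicator E) > 0" "Var M P (indicator E) = P E"
proof -
  have E[measurable]: "E \<in> sets M" and Ef: "emeasure M E < \<infinity>" and Ep: "0 < emeasure M E"
    and PE: "P E < \<infinity>" and Es: "msub M E \<Omega>"
    using assms by (auto simp: cheeger_competitor_def)
  have Esp: "E \<subseteq> space M" using sets.sets_into_space[OF E] .
  have int: "integrable M (indicator E :: 'a \<Rightarrow> real)"
    using E Ef Esp by (simp add: integrable_indicator_iff Int_absorb2)
  have eq: "(\<lambda>t. P {x \<in> space M. t < (indicator E x :: real)}) = (\<lambda>t. P E * indicator {0..<1} t)"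
  proof
    fix t :: real
    show "P {x \<in> space M. t < (indicator E x :: real)} = P E * indicator {0..<1} t"
    proof (cases "t < 0")
      case True
      then have "{x \<in> space M. t < (indicator E x :: real)} = space M"
        by (auto simp: indicator_def)
      then show ?thesis using True P_space by simp
    next
      case False
      show ?thesis
      proof (cases "t < 1")
        case True
        then have "{x \<in> space M. t < (indicator E x :: real)} = E"
          using False Esp by (auto simp: indicator_def)
        then show ?thesis using True False by simp
      next
        case False2: False
        then have "{x \<in> space M. t < (indicator E x :: real)} = {}"
          by (auto simp: indicator_def)
        then show ?thesis using False2 P1 by (simp del: Collect_empty_eq)
      qed
    qed
  qed
  have meas: "(\<lambda>t. P E * indicator {0..<1::real} t) \<in> borel_measurable lebesgue"
    by (intro measurable_completion) measurable
  have V: "Var M P (indicator E) = P E"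
    unfolding Var_def eq using meas
    by (simp add: nn_integral_completion nn_integral_cmult_indicator)
  then show "Var M P (indicator E) = P E" .
  have "(\<integral>\<^sup>+ x. ennreal \<bar>indicator E x :: real\<bar> * indicator (space M - \<Omega>) x \<partial>M) = (\<integral>\<^sup>+ x. indicator (E - \<Omega>) x \<partial>M)"
    by (intro nn_integral_cong) (auto simp: indicator_def)
  also have "\<dots> = 0" using Es \<Omega> by (simp add: msub_def)
  finally show "BV0 M P \<Omega> (indicator E)" using int V PE by (simp add: BV0_def BV_def)
  have "norm1 M (indicator E) = measure M E" unfolding norm1_def by simp
  then show "ennreal (norm1 M (indicator E)) = emeasure M E" using Ef
    by (simp add: emeasure_eq_ennreal_measure less_top)
  then show "norm1 M (indicator E) > 0" using Ep
    by (metis ennreal_less_zero_iff)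
qed

lemma lambda_eq: "lambda11 M P \<Omega> = h"
proof (rule antisym)
  show "lambda11 M P \<Omega> \<le> h"
    unfolding h1_def
  proof (rule Inf_greatest, clarify)
    fix E assume E: "cheeger_competitor M P \<Omega> E"
    have "lambda11 M P \<Omega> \<le> Var M P (indicator E) / ennreal (norm1 M (indicator E))"
      unfolding lambda11_def using indicator_BV0[OF E] by (intro Inf_lower) blast
    then show "lambda11 M P \<Omega> \<le> P E / emeasure M E" using indicator_BV0[OF E] by simp
  qed
  show "h \<le> lambda11 M P \<Omega>"
    unfolding lambda11_def
  proof (rule Inf_greatest, clarify)
    fix u assume u: "BV0 M P \<Omega> u" "0 < norm1 M u"
    show "h \<le> Var M P u / ennreal (norm1 M u)"
      using coarea_ineq[OF u(1)] ediv_ge_iff[of "ennreal (norm1 M u)"] u(2) by simp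
  qed
qed


lemma tend0:
  assumes B: "\<And>k. B k \<in> sets M" "antimono B" "\<And>k. B k \<subseteq> N" "N \<in> sets M" "emeasure M N < \<infinity>"
    "\<And>x. \<not> (\<forall>k. x \<in> B k)"
    and D: "\<And>k. D k \<in> sets M" "\<And>k. D k \<subseteq> B k"
  shows "(\<lambda>k. emeasure M (D k)) \<longlonglongrightarrow> 0"
proof -
  have N: "emeasure M (B k) \<noteq> \<infinity>" for k
  proof -
    have "emeasure M (B k) \<le> emeasure M N"
      using B by (intro emeasure_mono) auto
    then show ?thesis using B(5) by (auto simp: top_unique)
  qed
  have "(\<lambda>k. emeasure M (B k)) \<longlonglongrightarrow> emeasure M (\<Inter>(range B))"
    using B N by (intro Lim_emeasure_decseq) (auto simp: antimono_def monotone_on_def)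
  moreover have "\<Inter>(range B) = {}" using B(6) by auto
  ultimately have l: "(\<lambda>k. emeasure M (B k)) \<longlonglongrightarrow> 0" by simp
  have "\<forall>\<^sub>F k in sequentially. emeasure M (D k) \<le> emeasure M (B k)"
    using B D by (intro always_eventually allI emeasure_mono) auto
  then show ?thesis
    using tendsto_sandwich[OF _ _ tendsto_const l, of "\<lambda>k. emeasure M (D k)"] by simp
qed


lemma shrinkR:
  assumes u: "BV0 M P \<Omega> u" and D: "\<And>k. D k \<in> sets M"
    "\<And>k. D k \<subseteq> {x\<in>space M. u x \<noteq> 0 \<and> a < u x \<and> u x \<le> a + inverse (real (Suc k))}"
  shows "(\<lambda>k. emeasure M (D k)) \<longlonglongrightarrow> 0"
proof (rule tend0[OF _ _ _ _ nz_fin[OF u] _ D])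
  have um[measurable]: "u \<in> borel_measurable M" using BV0_meas[OF u] .
  show "{x\<in>space M. u x \<noteq> 0 \<and> a < u x \<and> u x \<le> a + inverse (real (Suc k))} \<in> sets M" for k
    by measurable
  show "{x\<in>space M. u x \<noteq> 0} \<in> sets M" by measurable
  show "antimono (\<lambda>k. {x\<in>space M. u x \<noteq> 0 \<and> a < u x \<and> u x \<le> a + inverse (real (Suc k))})"
  proof (rule antimonoI, safe)
    fix k l :: nat and x assume "k \<le> l" "u x \<le> a + inverse (real (Suc l))"
    moreover have "inverse (real (Suc l)) \<le> inverse (real (Suc k))" using \<open>k \<le> l\<close>
      by (simp add: le_imp_inverse_le)
    ultimately show "u x \<le> a + inverse (real (Suc k))" by linarith
  qed
  show "\<not> (\<forall>k. x \<in> {x\<in>space M. u x \<noteq> 0 \<and> a < u x \<and> u x \<le> a + inverse (real (Suc k))})" for x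
  proof
    assume H: "\<forall>k. x \<in> {x\<in>space M. u x \<noteq> 0 \<and> a < u x \<and> u x \<le> a + inverse (real (Suc k))}"
    then have "0 < u x - a" by auto
    then obtain n where "inverse (real (Suc n)) < u x - a" using reals_Archimedean by blast
    moreover have "u x \<le> a + inverse (real (Suc n))" using H by blast
    ultimately show False by linarith
  qed
qed auto

lemma shrinkL:
  assumes u: "BV0 M P \<Omega> u" and D: "\<And>k. D k \<in> sets M"
    "\<And>k. D k \<subseteq> {x\<in>space M. u x \<noteq> 0 \<and> a - inverse (real (Suc k)) < u x \<and> u x < a}"
  shows "(\<lambda>k. emeasure M (D k)) \<longlonglongrightarrow> 0"
proof (rule tend0[OF _ _ _ _ nz_fin[OF u] _ D])
  have um[measurable]: "u \<in> borel_measurable M" using BV0_meas[OF u] .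
  show "{x\<in>space M. u x \<noteq> 0 \<and> a - inverse (real (Suc k)) < u x \<and> u x < a} \<in> sets M" for k
    by measurable
  show "{x\<in>space M. u x \<noteq> 0} \<in> sets M" by measurable
  show "antimono (\<lambda>k. {x\<in>space M. u x \<noteq> 0 \<and> a - inverse (real (Suc k)) < u x \<and> u x < a})"
  proof (rule antimonoI, safe)
    fix k l :: nat and x assume "k \<le> l" "a - inverse (real (Suc l)) < u x"
    moreover have "inverse (real (Suc l)) \<le> inverse (real (Suc k))" using \<open>k \<le> l\<close>
      by (simp add: le_imp_inverse_le)
    ultimately show "a - inverse (real (Suc k)) < u x" by linarith
  qed
  show "\<not> (\<forall>k. x \<in> {x\<in>space M. u x \<noteq> 0 \<and> a - inverse (real (Suc k)) < u x \<and> u x < a})" for x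
  proof
    assume H: "\<forall>k. x \<in> {x\<in>space M. u x \<noteq> 0 \<and> a - inverse (real (Suc k)) < u x \<and> u x < a}"
    then have "0 < a - u x" by auto
    then obtain n where "inverse (real (Suc n)) < a - u x" using reals_Archimedean by blast
    moreover have "a - inverse (real (Suc n)) < u x" using H by blast
    ultimately show False by linarith
  qed
qed auto


lemma char_fwd:
  assumes u: "BV0 M P \<Omega> u" and eq: "Var M P u = h * ennreal (norm1 M u)"
    and tpos: "0 < emeasure M (Fset M u t)"
  shows "cheeger1 M P \<Omega> (Fset M u t)"
proof -
  have um[measurable]: "u \<in> borel_measurable M" using BV0_meas[OF u] .
  define f where "f = (\<lambda>t. P {x\<in>space M. t < u x})"
  define g where "g = (\<lambda>t. h * emeasure M {x\<in>space M. (0 \<le> t \<and> t < u x) \<or> (t < 0 \<and> u x \<le> t)})"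
  have fm[measurable]: "f \<in> borel_measurable lebesgue" using Var_eq(2)[OF u] by (simp add: f_def)
  have gm[measurable]: "g \<in> borel_measurable lebesgue" using g_integral(2)[OF u] by (simp add: g_def)
  have gf: "g t \<le> f t" for t using pointwise[OF u] by (simp add: f_def g_def)
  have If: "integral\<^sup>N lebesgue f = h * ennreal (norm1 M u)" using Var_eq(1)[OF u] eq by (simp add: f_def)
  have Ig: "integral\<^sup>N lebesgue g = h * ennreal (norm1 M u)" using g_integral(1)[OF u] by (simp add: g_def)
  have Ifin: "integral\<^sup>N lebesgue g \<noteq> \<infinity>" using Ig h_fin by (simp add: ennreal_mult_eq_top_iff)
  have "(\<integral>\<^sup>+t. f t - g t \<partial>lebesgue) = 0"
    using nn_integral_diff[OF fm gm Ifin AE_I2[OF gf]] If Ig Ifin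
    by (simp add: diff_eq_0_iff_ennreal top.not_eq_extremum)
  moreover have dm: "(\<lambda>t. f t - g t) \<in> borel_measurable lebesgue" by measurable
  ultimately have "AE t in lebesgue. f t - g t = 0" by (simp add: nn_integral_0_iff_AE)
  then have "AE t in lborel. f t - g t = 0" by (simp add: AE_completion_iff)
  then have fg: "AE t in lborel. f t = g t"
    by (rule eventually_mono) (use gf in \<open>auto simp: diff_eq_0_iff_ennreal intro: antisym\<close>)
  show ?thesis
  proof (cases "0 \<le> t")
    case True
    let ?G = "\<lambda>s. {x\<in>space M. s < u x}"
    have Fs: "Fset M u t = ?G t" using True by (simp add: Fset_def)
    have "\<forall>k. \<exists>s. t < s \<and> s < t + inverse (real (Suc k)) \<and> f s = g s"
      using AE_exists_in_interval[OF fg] by simp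
    then obtain s where s: "\<And>k. t < s k \<and> s k < t + inverse (real (Suc k)) \<and> f (s k) = g (s k)" by metis
    have "P (?G t) \<le> h * emeasure M (?G t)"
    proof (rule lsc_bound[where d="\<lambda>_. 0" and As="\<lambda>k. ?G (s k)"])
      show "(\<lambda>k. emeasure M ((?G (s k) - ?G t) \<union> (?G t - ?G (s k)))) \<longlonglongrightarrow> 0"
      proof (rule shrinkR[OF u, where a=t])
        fix k
        show "(?G (s k) - ?G t) \<union> (?G t - ?G (s k)) \<subseteq> {x\<in>space M. u x \<noteq> 0 \<and> t < u x \<and> u x \<le> t + inverse (real (Suc k))}"
          using s[of k] True by auto
      qed measurable
      fix k
      have e: "{x\<in>space M. (0 \<le> s k \<and> s k < u x) \<or> (s k < 0 \<and> u x \<le> s k)} = ?G (s k)"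
        using s[of k] True by auto
      have "P (?G (s k)) = h * emeasure M (?G (s k))"
        using s[of k] e by (simp add: f_def g_def)
      also have "\<dots> \<le> h * (emeasure M (?G t) + 0)"
        using s[of k] by (auto intro!: mult_left_mono emeasure_mono)
      finally show "P (?G (s k)) \<le> h * (emeasure M (?G t) + 0)" .
    qed auto
    moreover have "msub M (?G t) \<Omega>" using True by (intro sub_msub[OF u]) auto
    ultimately show ?thesis using tpos Fs by (auto intro!: cheegerI)
  next
    case False
    let ?G = "\<lambda>s. {x\<in>space M. s < u x}"
    let ?L = "{x\<in>space M. u x < t}"
    let ?Ge = "{x\<in>space M. t \<le> u x}"
    have Fs: "Fset M u t = ?L" using False by (simp add: Fset_def)
    have "\<forall>k. \<exists>s. t - inverse (real (Suc k)) < s \<and> s < t \<and> f s = g s"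
      using AE_exists_in_interval[OF fg] by simp
    then obtain s where s: "\<And>k. t - inverse (real (Suc k)) < s k \<and> s k < t \<and> f (s k) = g (s k)" by metis
    have "P ?Ge \<le> h * emeasure M ?L"
    proof (rule lsc_bound[where d="\<lambda>_. 0" and As="\<lambda>k. ?G (s k)"])
      show "(\<lambda>k. emeasure M ((?G (s k) - ?Ge) \<union> (?Ge - ?G (s k)))) \<longlonglongrightarrow> 0"
      proof (rule shrinkL[OF u, where a=t])
        fix k
        show "(?G (s k) - ?Ge) \<union> (?Ge - ?G (s k)) \<subseteq> {x\<in>space M. u x \<noteq> 0 \<and> t - inverse (real (Suc k)) < u x \<and> u x < t}"
          using s[of k] False by auto
      qed measurable
      fix k
      have e: "{x\<in>space M. (0 \<le> s k \<and> s k < u x) \<or> (s k < 0 \<and> u x \<le> s k)} = {x\<in>space M. u x \<le> s k}"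
        using s[of k] False by auto
      have "P (?G (s k)) = h * emeasure M {x\<in>space M. u x \<le> s k}"
        using s[of k] e by (simp add: f_def g_def)
      also have "\<dots> \<le> h * (emeasure M ?L + 0)"
        using s[of k] by (auto intro!: mult_left_mono emeasure_mono)
      finally show "P (?G (s k)) \<le> h * (emeasure M ?L + 0)" .
    qed auto
    moreover have "P ?L = P ?Ge"
    proof -
      have "P ?L = P (space M - ?L)" by (intro P7) measurable
      also have "space M - ?L = ?Ge" by auto
      finally show ?thesis .
    qed
    ultimately have "P ?L \<le> h * emeasure M ?L" by simp
    moreover have "msub M ?L \<Omega>" using False by (intro sub_msub[OF u]) auto
    ultimately show ?thesis using tpos Fs by (auto intro!: cheegerI)
  qed
qed


lemma Fset_sets: assumes [measurable]: "u \<in> borel_measurable M" shows "Fset M u t \<in> sets M"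
  unfolding Fset_def by (cases "0 \<le> t") (simp_all, measurable)

lemma char_bwd:
  assumes u: "BV0 M P \<Omega> u" and all: "\<forall>t. 0 < emeasure M (Fset M u t) \<longrightarrow> cheeger1 M P \<Omega> (Fset M u t)"
  shows "Var M P u \<le> h * ennreal (norm1 M u)"
proof -
  have um[measurable]: "u \<in> borel_measurable M" using BV0_meas[OF u] .
  have PF: "P (Fset M u t) = h * emeasure M (Fset M u t)" for t
  proof (cases "emeasure M (Fset M u t) = 0")
    case True then show ?thesis using P_null[OF Fset_sets[OF um]] by simp
  next
    case False then show ?thesis using all cheegerD(1) by (auto simp: zero_less_iff_neq_zero)
  qed
  define f where "f = (\<lambda>t. P {x\<in>space M. t < u x})"
  define g where "g = (\<lambda>t. h * emeasure M {x\<in>space M. (0 \<le> t \<and> t < u x) \<or> (t < 0 \<and> u x \<le> t)})"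
  have fg: "f t \<le> g t" for t
  proof (cases "0 \<le> t")
    case True
    have "Fset M u t = {x\<in>space M. t < u x}" "{x\<in>space M. (0 \<le> t \<and> t < u x) \<or> (t < 0 \<and> u x \<le> t)} = {x\<in>space M. t < u x}"
      using True by (auto simp: Fset_def)
    then show ?thesis using PF[of t] by (simp add: f_def g_def)
  next
    case False
    let ?Le = "{x\<in>space M. u x \<le> t}"
    let ?L = "\<lambda>s. {x\<in>space M. u x < s}"
    define s where "s = (\<lambda>k. min (t + inverse (real (Suc k))) (t / 2))"
    have s: "t < s k" "s k < 0" "s k \<le> t + inverse (real (Suc k))" for k
      using False by (auto simp: s_def)
    have "P ?Le \<le> h * emeasure M ?Le"
    proof (rule lsc_bound[where As="\<lambda>k. ?L (s k)" and d="\<lambda>k. emeasure M (?L (s k) - ?Le)"])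
      show "(\<lambda>k. emeasure M ((?L (s k) - ?Le) \<union> (?Le - ?L (s k)))) \<longlonglongrightarrow> 0"
      proof (rule shrinkR[OF u, where a=t])
        fix k
        show "(?L (s k) - ?Le) \<union> (?Le - ?L (s k)) \<subseteq> {x\<in>space M. u x \<noteq> 0 \<and> t < u x \<and> u x \<le> t + inverse (real (Suc k))}"
          using s[of k] by auto
      qed measurable
      show "(\<lambda>k. emeasure M (?L (s k) - ?Le)) \<longlonglongrightarrow> 0"
      proof (rule shrinkR[OF u, where a=t])
        fix k
        show "?L (s k) - ?Le \<subseteq> {x\<in>space M. u x \<noteq> 0 \<and> t < u x \<and> u x \<le> t + inverse (real (Suc k))}"
          using s[of k] by auto
      qed measurable
      fix k
      have "Fset M u (s k) = ?L (s k)" using s[of k] by (simp add: Fset_def)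
      then have "P (?L (s k)) = h * emeasure M (?L (s k))" using PF[of "s k"] by simp
      also have "emeasure M (?L (s k)) \<le> emeasure M (?Le \<union> (?L (s k) - ?Le))"
        by (intro emeasure_mono) auto
      also have "\<dots> \<le> emeasure M ?Le + emeasure M (?L (s k) - ?Le)"
        by (intro emeasure_subadditive) auto
      finally show "P (?L (s k)) \<le> h * (emeasure M ?Le + emeasure M (?L (s k) - ?Le))"
        by (simp add: mult_left_mono)
    qed auto
    moreover have "P {x\<in>space M. t < u x} = P ?Le"
    proof -
      have "P {x\<in>space M. t < u x} = P (space M - {x\<in>space M. t < u x})" by (intro P7) measurable
      also have "space M - {x\<in>space M. t < u x} = ?Le" by auto
      finally show ?thesis .
    qed
    moreover have "{x\<in>space M. (0 \<le> t \<and> t < u x) \<or> (t < 0 \<and> u x \<le> t)} = ?Le"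
      using False by auto
    ultimately show ?thesis by (simp add: f_def g_def)
  qed
  have "Var M P u = integral\<^sup>N lebesgue f" using Var_eq(1)[OF u] by (simp add: f_def)
  also have "\<dots> \<le> integral\<^sup>N lebesgue g" using fg by (intro nn_integral_mono) auto
  also have "\<dots> = h * ennreal (norm1 M u)" using g_integral(1)[OF u] by (simp add: g_def)
  finally show ?thesis .
qed

lemma char:
  assumes u: "BV0 M P \<Omega> u" and n: "0 < norm1 M u"
  shows "Var M P u / ennreal (norm1 M u) = lambda11 M P \<Omega> \<longleftrightarrow>
         (\<forall>t. 0 < emeasure M (Fset M u t) \<longrightarrow> cheeger1 M P \<Omega> (Fset M u t))"
proof -
  have "Var M P u / ennreal (norm1 M u) = lambda11 M P \<Omega> \<longleftrightarrow> Var M P u = h * ennreal (norm1 M u)"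
    using lambda_eq ediv_eq_iff[of "ennreal (norm1 M u)"] n by simp
  also have "\<dots> \<longleftrightarrow> (\<forall>t. 0 < emeasure M (Fset M u t) \<longrightarrow> cheeger1 M P \<Omega> (Fset M u t))"
    using char_fwd[OF u] char_bwd[OF u] coarea_ineq[OF u] by (auto intro: antisym)
  finally show ?thesis .
qed


lemma cheeger_min: assumes "cheeger1 M P \<Omega> E" shows "lambda11_minimizer M P \<Omega> (indicator E)"
proof -
  have c: "cheeger_competitor M P \<Omega> E" using assms by (simp add: cheeger1_def)
  have "P E / emeasure M E = lambda11 M P \<Omega>" using assms lambda_eq by (simp add: cheeger1_def)
  then show ?thesis using indicator_BV0[OF c] by (simp add: lambda11_minimizer_def)
qed

lemma min_char:
  assumes "lambda11_minimizer M P \<Omega> u"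
  shows "BV0 M P \<Omega> u" "0 < norm1 M u" "\<And>t. 0 < emeasure M (Fset M u t) \<Longrightarrow> cheeger1 M P \<Omega> (Fset M u t)"
  using assms char[of u] by (auto simp: lambda11_minimizer_def)

lemma norm_AE0:
  assumes "BV0 M P \<Omega> u" "AE x in M. u x = 0" shows "norm1 M u = 0"
proof -
  have um[measurable]: "u \<in> borel_measurable M" using BV0_meas[OF assms(1)] .
  have "norm1 M u = (\<integral>x. 0 \<partial>M)" unfolding norm1_def
    by (rule integral_cong_AE) (use assms(2) in \<open>auto elim!: eventually_mono\<close>)
  then show ?thesis by simp
qed

lemma exists_pos_level:
  assumes u: "BV0 M P \<Omega> u" "0 < norm1 M u"
  shows "\<exists>t. 0 < emeasure M (Fset M u t)"
proof (rule ccontr)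
  assume "\<not> ?thesis"
  then have z: "emeasure M (Fset M u t) = 0" for t by (simp add: zero_less_iff_neq_zero)
  have um[measurable]: "u \<in> borel_measurable M" using BV0_meas[OF u(1)] .
  have "AE x in M. \<forall>k::nat. x \<notin> Fset M u (- inverse (real (Suc k)))"
    unfolding AE_all_countable using z nullAE[OF Fset_sets[OF um]] by blast
  moreover have "AE x in M. x \<notin> Fset M u 0"
    using z nullAE[OF Fset_sets[OF um]] by blast
  moreover note AE_space
  ultimately have "AE x in M. u x = 0"
  proof eventually_elim
    case (elim x)
    show ?case
    proof (rule ccontr)
      assume ne: "u x \<noteq> 0"
      show False
      proof (cases "0 < u x")
        case True then show False using elim by (simp add: Fset_def)
      next
        case False
        then have "0 < - u x" using ne by simp
        then obtain n where "inverse (real (Suc n)) < - u x" using reals_Archimedean by blast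
        then have "x \<in> Fset M u (- inverse (real (Suc n)))" using elim(3) by (simp add: Fset_def)
        then show False using elim(1) by blast
      qed
    qed
  qed
  then show False using norm_AE0[OF u(1)] u(2) by simp
qed


lemma uniq_fwd:
  assumes "\<exists>u. lambda11_minimizer M P \<Omega> u \<and>
              (\<forall>v. lambda11_minimizer M P \<Omega> v \<longrightarrow> (\<exists>c::real. c \<noteq> 0 \<and> (AE x in M. v x = c * u x)))"
  shows "\<exists>E. cheeger1 M P \<Omega> E \<and>
              (\<forall>F. cheeger1 M P \<Omega> F \<longrightarrow> emeasure M (E - F) = 0 \<and> emeasure M (F - E) = 0)"
proof -
  obtain u where u: "lambda11_minimizer M P \<Omega> u"
    and uu: "\<And>v. lambda11_minimizer M P \<Omega> v \<Longrightarrow> \<exists>c::real. c \<noteq> 0 \<and> (AE x in M. v x = c * u x)"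
    using assms by blast
  obtain t where t: "0 < emeasure M (Fset M u t)"
    using exists_pos_level[OF min_char(1,2)[OF u]] by blast
  define E where "E = Fset M u t"
  have E: "cheeger1 M P \<Omega> E" using min_char(3)[OF u t] by (simp add: E_def)
  have "emeasure M (E - F) = 0 \<and> emeasure M (F - E) = 0" if F: "cheeger1 M P \<Omega> F" for F
  proof -
    obtain c1 where c1: "c1 \<noteq> 0" "AE x in M. indicator F x = c1 * u x"
      using uu[OF cheeger_min[OF F]] by blast
    obtain c2 where c2: "c2 \<noteq> 0" "AE x in M. indicator E x = c2 * u x"
      using uu[OF cheeger_min[OF E]] by blast
    have Es: "E \<in> sets M" and Fs: "F \<in> sets M" using cheegerD(2) E F by auto
    have "AE x in M. x \<notin> E - F" using c1(2) c2(2)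
    proof eventually_elim
      case (elim x)
      show ?case
      proof
        assume x: "x \<in> E - F"
        then have "c1 * u x = 0" "c2 * u x = 1" using elim by (auto simp: indicator_def)
        then show False using c1(1) by simp
      qed
    qed
    moreover have "AE x in M. x \<notin> F - E" using c1(2) c2(2)
    proof eventually_elim
      case (elim x)
      show ?case
      proof
        assume x: "x \<in> F - E"
        then have "c1 * u x = 1" "c2 * u x = 0" using elim by (auto simp: indicator_def)
        then show False using c2(1) by simp
      qed
    qed
    ultimately show ?thesis using AE_null[of "E - F"] AE_null[of "F - E"] Es Fs by auto
  qed
  then show ?thesis using E by blast
qed

lemma uniq_bwd:
  assumes E: "cheeger1 M P \<Omega> E"
    and uniq: "\<And>F. cheeger1 M P \<Omega> F \<Longrightarrow> emeasure M (E - F) = 0 \<and> emeasure M (F - E) = 0"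
    and v: "lambda11_minimizer M P \<Omega> v"
  shows "\<exists>c::real. c \<noteq> 0 \<and> (AE x in M. v x = c * indicator E x)"
proof -
  have vb: "BV0 M P \<Omega> v" and vn: "0 < norm1 M v" using min_char[OF v] by auto
  have vm[measurable]: "v \<in> borel_measurable M" using BV0_meas[OF vb] .
  have Es[measurable]: "E \<in> sets M" and Ep: "0 < emeasure M E" using cheegerD[OF E] by auto
  have K: "emeasure M (Fset M v t) = 0 \<or> (emeasure M (E - Fset M v t) = 0 \<and> emeasure M (Fset M v t - E) = 0)" for t
    using min_char(3)[OF v, of t] uniq by (auto simp: zero_less_iff_neq_zero)
  have "\<exists>c. AE x in M. v x = c * indicator E x"
  proof (cases "emeasure M {x\<in>space M. 0 < v x} = 0")
    case False
    have F0: "Fset M v 0 = {x\<in>space M. 0 < v x}" by (simp add: Fset_def)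
    have G0: "emeasure M (E - {x\<in>space M. 0 < v x}) = 0" using K[of 0] False F0 by auto
    have a: "AE x in M. 0 \<le> v x"
    proof -
      have "emeasure M {x\<in>space M. v x < - inverse (real (Suc k))} = 0" for k
      proof (rule ccontr)
        let ?L = "{x\<in>space M. v x < - inverse (real (Suc k))}"
        assume ne: "emeasure M ?L \<noteq> 0"
        have "Fset M v (- inverse (real (Suc k))) = ?L" by (simp add: Fset_def)
        then have L: "emeasure M (E - ?L) = 0" using K[of "- inverse (real (Suc k))"] ne by auto
        have "E \<subseteq> (E - ?L) \<union> (E - {x\<in>space M. 0 < v x})"
        proof
          fix x assume "x \<in> E"
          have "0 < inverse (real (Suc k))" by simp
          then have "\<not> (0 < v x \<and> v x < - inverse (real (Suc k)))" by linarith
          then show "x \<in> (E - ?L) \<union> (E - {x\<in>space M. 0 < v x})" using \<open>x \<in> E\<close>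
            by auto
        qed
        then have "emeasure M E \<le> emeasure M ((E - ?L) \<union> (E - {x\<in>space M. 0 < v x}))"
          by (intro emeasure_mono) auto
        also have "\<dots> \<le> emeasure M (E - ?L) + emeasure M (E - {x\<in>space M. 0 < v x})"
          by (intro emeasure_subadditive) auto
        finally show False using L G0 Ep by simp
      qed
      then have "AE x in M. \<forall>k::nat. \<not> v x < - inverse (real (Suc k))"
        unfolding AE_all_countable
      proof (intro allI)
        fix k :: nat
        assume z: "\<And>k. emeasure M {x\<in>space M. v x < - inverse (real (Suc k))} = 0"
        have "AE x in M. x \<notin> {x\<in>space M. v x < - inverse (real (Suc k))}"
          by (rule nullAE[OF _ z]) measurable
        then show "AE x in M. \<not> v x < - inverse (real (Suc k))" by (auto elim!: eventually_mono)
      qed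
      then show ?thesis
      proof eventually_elim
        case (elim x)
        show ?case
        proof (rule ccontr)
          assume "\<not> 0 \<le> v x"
          then obtain n where "inverse (real (Suc n)) < - v x" using reals_Archimedean[of "- v x"] by auto
          moreover have "\<not> v x < - inverse (real (Suc n))" using elim by blast
          ultimately show False by linarith
        qed
      qed
    qed
    show ?thesis
    proof (rule level_const[OF vm Es Ep a])
      fix t :: real assume "0 < t"
      then have "Fset M v t = {x\<in>space M. t < v x}" by (simp add: Fset_def)
      then show "emeasure M {x\<in>space M. t < v x} = 0 \<or>
             (emeasure M (E - {x\<in>space M. t < v x}) = 0 \<and> emeasure M ({x\<in>space M. t < v x} - E) = 0)"
        using K[of t] by simp
    qed
  next
    case True
    have a: "AE x in M. 0 \<le> - v x"
      using nullAE[OF _ True] by (auto elim!: eventually_mono)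
    have "\<exists>c. AE x in M. - v x = c * indicator E x"
    proof (rule level_const[OF _ Es Ep a])
      fix t :: real assume "0 < t"
      then have "Fset M v (- t) = {x\<in>space M. t < - v x}" by (auto simp: Fset_def)
      then show "emeasure M {x\<in>space M. t < - v x} = 0 \<or>
             (emeasure M (E - {x\<in>space M. t < - v x}) = 0 \<and> emeasure M ({x\<in>space M. t < - v x} - E) = 0)"
        using K[of "- t"] by simp
    qed measurable
    then obtain c where "AE x in M. - v x = c * indicator E x" by blast
    then have "AE x in M. v x = (- c) * indicator E x" by (auto elim!: eventually_mono)
    then show ?thesis by blast
  qed
  then obtain c where c: "AE x in M. v x = c * indicator E x" by blast
  have "c \<noteq> 0"
  proof
    assume "c = 0"
    then have "AE x in M. v x = 0" using c by simp
    then show False using norm_AE0[OF vb] vn by simp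
  qed
  then show ?thesis using c by blast
qed

end

theorem corollary5p5:
  fixes M :: "'a measure" and P :: "'a set \<Rightarrow> ennreal" and \<Omega> :: "'a set"
  assumes sf: "sigma_finite_measure M"
    and proper: "\<exists>E\<in>sets M. P E < \<infinity>"
    and P1: "P {} = 0"
    and P4: "\<And>Es E. (\<forall>k. Es k \<in> sets M) \<Longrightarrow> E \<in> sets M \<Longrightarrow>
               (\<lambda>k. \<integral>\<^sup>+ x. ennreal \<bar>indicator (Es k) x - indicator E x\<bar> \<partial>M) \<longlonglongrightarrow> 0 \<Longrightarrow>
               P E \<le> liminf (\<lambda>k. P (Es k))"
    and P7: "\<And>E. E \<in> sets M \<Longrightarrow> P E = P (space M - E)"
    and \<Omega>: "\<Omega> \<in> sets M"
    and adm: "admissible1 M P \<Omega>"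
    and pos: "0 < emeasure M \<Omega>" and fin: "emeasure M \<Omega> < \<infinity>"
  shows "(\<forall>u. BV0 M P \<Omega> u \<and> norm1 M u > 0 \<longrightarrow>
            (Var M P u / ennreal (norm1 M u) = lambda11 M P \<Omega> \<longleftrightarrow>
             (\<forall>t. 0 < emeasure M (Fset M u t) \<longrightarrow> cheeger1 M P \<Omega> (Fset M u t))))
       \<and> ((\<exists>u. lambda11_minimizer M P \<Omega> u \<and>
              (\<forall>v. lambda11_minimizer M P \<Omega> v \<longrightarrow>
                   (\<exists>c::real. c \<noteq> 0 \<and> (AE x in M. v x = c * u x))))
          \<longleftrightarrow>
          (\<exists>E. cheeger1 M P \<Omega> E \<and>
              (\<forall>F. cheeger1 M P \<Omega> F \<longrightarrow> emeasure M (E - F) = 0 \<and> emeasure M (F - E) = 0)))"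
proof -
  interpret CS M P \<Omega>
    by (rule CS.intro[OF sf P1 P4 P7 \<Omega> adm fin])
  have part1: "\<forall>u. BV0 M P \<Omega> u \<and> norm1 M u > 0 \<longrightarrow>
            (Var M P u / ennreal (norm1 M u) = lambda11 M P \<Omega> \<longleftrightarrow>
             (\<forall>t. 0 < emeasure M (Fset M u t) \<longrightarrow> cheeger1 M P \<Omega> (Fset M u t)))"
  proof (intro allI impI)
    fix u assume "BV0 M P \<Omega> u \<and> norm1 M u > 0"
    then show "Var M P u / ennreal (norm1 M u) = lambda11 M P \<Omega> \<longleftrightarrow>
             (\<forall>t. 0 < emeasure M (Fset M u t) \<longrightarrow> cheeger1 M P \<Omega> (Fset M u t))"
      using char[of u] by simp
  qed
  have part2: "(\<exists>E. cheeger1 M P \<Omega> E \<and>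
              (\<forall>F. cheeger1 M P \<Omega> F \<longrightarrow> emeasure M (E - F) = 0 \<and> emeasure M (F - E) = 0))
     \<Longrightarrow> (\<exists>u. lambda11_minimizer M P \<Omega> u \<and>
              (\<forall>v. lambda11_minimizer M P \<Omega> v \<longrightarrow>
                   (\<exists>c::real. c \<noteq> 0 \<and> (AE x in M. v x = c * u x))))"
  proof -
    assume "\<exists>E. cheeger1 M P \<Omega> E \<and>
              (\<forall>F. cheeger1 M P \<Omega> F \<longrightarrow> emeasure M (E - F) = 0 \<and> emeasure M (F - E) = 0)"
    then obtain E where E: "cheeger1 M P \<Omega> E"
      and U: "\<And>F. cheeger1 M P \<Omega> F \<Longrightarrow> emeasure M (E - F) = 0 \<and> emeasure M (F - E) = 0" by blast
    show ?thesis
    proof (rule exI[of _ "indicator E"], intro conjI allI impI)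
      show "lambda11_minimizer M P \<Omega> (indicator E)" by (rule cheeger_min[OF E])
      fix v assume v: "lambda11_minimizer M P \<Omega> v"
      show "\<exists>c::real. c \<noteq> 0 \<and> (AE x in M. v x = c * indicator E x)" using uniq_bwd[OF E U v] .
    qed
  qed
  show ?thesis
  proof (intro conjI iffI)
    show "\<forall>u. BV0 M P \<Omega> u \<and> norm1 M u > 0 \<longrightarrow>
            (Var M P u / ennreal (norm1 M u) = lambda11 M P \<Omega> \<longleftrightarrow>
             (\<forall>t. 0 < emeasure M (Fset M u t) \<longrightarrow> cheeger1 M P \<Omega> (Fset M u t)))" by (rule part1)
  next
    assume X: "\<exists>u. lambda11_minimizer M P \<Omega> u \<and>
              (\<forall>v. lambda11_minimizer M P \<Omega> v \<longrightarrow>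
                   (\<exists>c::real. c \<noteq> 0 \<and> (AE x in M. v x = c * u x)))"
    show "\<exists>E. cheeger1 M P \<Omega> E \<and>
              (\<forall>F. cheeger1 M P \<Omega> F \<longrightarrow> emeasure M (E - F) = 0 \<and> emeasure M (F - E) = 0)"
      by (rule uniq_fwd[OF X])
  next
    assume Y: "\<exists>E. cheeger1 M P \<Omega> E \<and>
              (\<forall>F. cheeger1 M P \<Omega> F \<longrightarrow> emeasure M (E - F) = 0 \<and> emeasure M (F - E) = 0)"
    show "\<exists>u. lambda11_minimizer M P \<Omega> u \<and>
              (\<forall>v. lambda11_minimizer M P \<Omega> v \<longrightarrow>
                   (\<exists>c::real. c \<noteq> 0 \<and> (AE x in M. v x = c * u x)))"
      by (rule part2[OF Y])
  qed
qed

end
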